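(* Let $(X,b,m)$ be a connected weighted graph satisfying conditions (B) and (M), let $V:X\to\mathbb{R}$ be bounded, and let $\lambda_V:=\inf\sigma(L_V)$. Let $D\subset X$ be relatively dense with covering radius $R$, and $\Omega:=X\setminus D$. If there exists a regular ground state of $L_V$ with bound $c$, then for all $f\in\ell^2(X,m)$ with $f=0$ on $D$, $$\mathcal{E}_V(f,f)\ge\left(\lambda_V+\frac{1}{c^4\cdot R\cdot\mathrm{vol}[c^2R]}\right)\|f\|^2 .$$
   Context: A weighted graph $(X,b,m)$: $X$ countable, $b:X\times X\to[0,\infty)$ symmetric with $b(x,x)=0$ and $\sum_y b(x,y)<\infty$, $m:X\to(0,\infty)$; $\mathrm{vol}(A):=\sum_{x\in A}m(x)$. Condition (B): $\sup_x\frac{1}{m(x)}\sum_y b(x,y)<\infty$. Condition (M): $\sup_x m(x)<\infty$. On $\ell^2(X,m)$ (norm $\|f\|^2=\sum_x|f(x)|^2m(x)$), $\mathcal{E}(f,g)=\frac12\sum_{x,y}b(x,y)(f(x)-f(y))(\overline{g(x)}-\overline{g(y)})$ and $\mathcal{E}_V(f,g):=\mathcal{E}(f,g)+\sum_x V(x)f(x)\overline{g(x)}$; $L_V$ is the associated bounded selfadjoint operator $(L_Vf)(x)=\frac{1}{m(x)}\left(\sum_y b(x,y)(f(x)-f(y))+V(x)f(x)\right)$. A ground state of $L_V$ is a function $\phi:X\to(0,\infty)$ with $\sum_y b(x,y)\phi(y)<\infty$ for all $x$ and $\frac{1}{m(x)}\left(\sum_y b(x,y)(\phi(x)-\phi(y))+V(x)\phi(x)\right)-\lambda_V\phi(x)\ge0$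 for all $x\in X$; it is regular with bound $c\ge1$ if $1/c\le\phi(x)\le c$ for all $x$. A path is $\gamma=(x_0,\dots,x_k)$ with $b(x_j,x_{j+1})>0$, of length $\sum_{j=0}^{k-1}1/b(x_j,x_{j+1})$; connected means any two points are joined by a path; $d(x,y)$ is the infimum of path lengths; $B_r(x):=\{y:d(x,y)\le r\}$; $\mathrm{vol}[s]:=\sup_{x}\mathrm{vol}(B_s(x))$. The covering radius of $D$ is $\inf\{R>0:\bigcup_{p\in D}B_R(p)=X\}$, and $D$ is relatively dense if it is finite. *)

theory Defs
  imports "HOL-Analysis.Analysis" "HOL-Library.Extended_Nonnegative_Real"
begin

text \<open>Weighted graph on the countable vertex type 'a (X = UNIV).\<close>

definition weighted_graph :: "('a::countable \<Rightarrow> 'a \<Rightarrow> real) \<Rightarrow> ('a \<Rightarrow> real) \<Rightarrow> bool" where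
  "weighted_graph b m \<longleftrightarrow>
     (\<forall>x y. b x y \<ge> 0) \<and> (\<forall>x y. b x y = b y x) \<and> (\<forall>x. b x x = 0) \<and>
     (\<forall>x. b x summable_on UNIV) \<and> (\<forall>x. m x > 0)"

definition cond_B :: "('a \<Rightarrow> 'a \<Rightarrow> real) \<Rightarrow> ('a \<Rightarrow> real) \<Rightarrow> bool" where
  "cond_B b m \<longleftrightarrow> (\<exists>C. \<forall>x. (\<Sum>\<^sub>\<infinity>y. b x y) / m x \<le> C)"

definition cond_M :: "('a \<Rightarrow> real) \<Rightarrow> bool" where
  "cond_M m \<longleftrightarrow> (\<exists>C. \<forall>x. m x \<le> C)"

definition is_path :: "('a \<Rightarrow> 'a \<Rightarrow> real) \<Rightarrow> 'a list \<Rightarrow> bool" where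
  "is_path b \<gamma> \<longleftrightarrow> \<gamma> \<noteq> [] \<and> (\<forall>j. Suc j < length \<gamma> \<longrightarrow> b (\<gamma> ! j) (\<gamma> ! Suc j) > 0)"

definition path_length :: "('a \<Rightarrow> 'a \<Rightarrow> real) \<Rightarrow> 'a list \<Rightarrow> real" where
  "path_length b \<gamma> = (\<Sum>j<length \<gamma> - 1. 1 / b (\<gamma> ! j) (\<gamma> ! Suc j))"

definition graph_connected :: "('a \<Rightarrow> 'a \<Rightarrow> real) \<Rightarrow> bool" where
  "graph_connected b \<longleftrightarrow>
     (\<forall>x y. \<exists>\<gamma>. is_path b \<gamma> \<and> hd \<gamma> = x \<and> last \<gamma> = y)"

definition gdist :: "('a \<Rightarrow> 'a \<Rightarrow> real) \<Rightarrow> 'a \<Rightarrow> 'a \<Rightarrow> real" where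
  "gdist b x y = Inf {path_length b \<gamma> | \<gamma>. is_path b \<gamma> \<and> hd \<gamma> = x \<and> last \<gamma> = y}"

definition gball :: "('a \<Rightarrow> 'a \<Rightarrow> real) \<Rightarrow> 'a \<Rightarrow> real \<Rightarrow> 'a set" where
  "gball b x r = {y. gdist b x y \<le> r}"

definition gvol :: "('a \<Rightarrow> real) \<Rightarrow> 'a set \<Rightarrow> ennreal" where
  "gvol m A = (\<Sum>\<^sub>\<infinity>x\<in>A. ennreal (m x))"

definition vol_sup :: "('a \<Rightarrow> 'a \<Rightarrow> real) \<Rightarrow> ('a \<Rightarrow> real) \<Rightarrow> real \<Rightarrow> ennreal" where
  "vol_sup b m s = (SUP x. gvol m (gball b x s))"

definition covering_radius :: "('a \<Rightarrow> 'a \<Rightarrow> real) \<Rightarrow> 'a set \<Rightarrow> real" where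
  "covering_radius b D = Inf {R. R > 0 \<and> (\<Union>p\<in>D. gball b p R) = UNIV}"

definition rel_dense :: "('a \<Rightarrow> 'a \<Rightarrow> real) \<Rightarrow> 'a set \<Rightarrow> bool" where
  "rel_dense b D \<longleftrightarrow> (\<exists>R>0. (\<Union>p\<in>D. gball b p R) = UNIV)"

definition l2 :: "('a \<Rightarrow> real) \<Rightarrow> ('a \<Rightarrow> complex) set" where
  "l2 m = {f. (\<lambda>x. (cmod (f x))\<^sup>2 * m x) summable_on UNIV}"

definition l2_norm_sq :: "('a \<Rightarrow> real) \<Rightarrow> ('a \<Rightarrow> complex) \<Rightarrow> real" where
  "l2_norm_sq m f = (\<Sum>\<^sub>\<infinity>x. (cmod (f x))\<^sup>2 * m x)"

text \<open>The form E_V(f,f) (diagonal of the sesquilinear form; real valued).\<close>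
definition energy_V :: "('a \<Rightarrow> 'a \<Rightarrow> real) \<Rightarrow> ('a \<Rightarrow> real) \<Rightarrow> ('a \<Rightarrow> complex) \<Rightarrow> real" where
  "energy_V b V f = (1/2) * (\<Sum>\<^sub>\<infinity>(x,y). b x y * (cmod (f x - f y))\<^sup>2) + (\<Sum>\<^sub>\<infinity>x. V x * (cmod (f x))\<^sup>2)"

definition L_op :: "('a \<Rightarrow> 'a \<Rightarrow> real) \<Rightarrow> ('a \<Rightarrow> real) \<Rightarrow> ('a \<Rightarrow> real) \<Rightarrow> ('a \<Rightarrow> complex) \<Rightarrow> 'a \<Rightarrow> complex" where
  "L_op b m V f x = (1 / of_real (m x)) *
     ((\<Sum>\<^sub>\<infinity>y. of_real (b x y) * (f x - f y)) + of_real (V x) * f x)"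

text \<open>Spectrum of L_V on l2(X,m): z such that L_V - z is not a bijection of l2(X,m)
  (for a bounded operator the inverse is then automatically bounded).\<close>
definition spectrum_L :: "('a \<Rightarrow> 'a \<Rightarrow> real) \<Rightarrow> ('a \<Rightarrow> real) \<Rightarrow> ('a \<Rightarrow> real) \<Rightarrow> complex set" where
  "spectrum_L b m V = {z. \<not> bij_betw (\<lambda>f x. L_op b m V f x - z * f x) (l2 m) (l2 m)}"

definition lambda_V :: "('a \<Rightarrow> 'a \<Rightarrow> real) \<Rightarrow> ('a \<Rightarrow> real) \<Rightarrow> ('a \<Rightarrow> real) \<Rightarrow> real" where
  "lambda_V b m V = Inf {t::real. complex_of_real t \<in> spectrum_L b m V}"

definition ground_state :: "('a \<Rightarrow> 'a \<Rightarrow> real) \<Rightarrow> ('a \<Rightarrow> real) \<Rightarrow> ('a \<Rightarrow> real) \<Rightarrow> ('a \<Rightarrow> real) \<Rightarrow> bool" where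
  "ground_state b m V \<phi> \<longleftrightarrow>
     (\<forall>x. \<phi> x > 0) \<and> (\<forall>x. (\<lambda>y. b x y * \<phi> y) summable_on UNIV) \<and>
     (\<forall>x. (1 / m x) * ((\<Sum>\<^sub>\<infinity>y. b x y * (\<phi> x - \<phi> y)) + V x * \<phi> x)
            - lambda_V b m V * \<phi> x \<ge> 0)"

definition regular_ground_state :: "('a \<Rightarrow> 'a \<Rightarrow> real) \<Rightarrow> ('a \<Rightarrow> real) \<Rightarrow> ('a \<Rightarrow> real) \<Rightarrow> ('a \<Rightarrow> real) \<Rightarrow> real \<Rightarrow> bool" where
  "regular_ground_state b m V \<phi> c \<longleftrightarrow>
     ground_state b m V \<phi> \<and> c \<ge> 1 \<and> (\<forall>x. 1 / c \<le> \<phi> x \<and> \<phi> x \<le> c)"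

end

theory Submission
  imports Defs
begin

fun plen :: "('a \<Rightarrow> 'a \<Rightarrow> real) \<Rightarrow> 'a list \<Rightarrow> real" where
  "plen b (x # y # r) = 1 / b x y + plen b (y # r)"
| "plen b _ = 0"

fun esum :: "('a \<Rightarrow> 'a \<Rightarrow> real) \<Rightarrow> 'a list \<Rightarrow> real" where
  "esum w (x # y # r) = w x y + esum w (y # r)"
| "esum w _ = 0"

lemma path_length_plen: "path_length b \<gamma> = plen b \<gamma>"
proof (induction b \<gamma> rule: plen.induct)
  case (1 b x y r)
  have "path_length b (x # y # r) = (\<Sum>j<Suc (length r). 1 / b ((x # y # r) ! j) ((x # y # r) ! Suc j))"
    by (simp add: path_length_def)
  also have "\<dots> = 1 / b x y + (\<Sum>j<length r. 1 / b ((y # r) ! j) ((y # r) ! Suc j))"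
    by (subst sum.lessThan_Suc_shift) simp
  also have "(\<Sum>j<length r. 1 / b ((y # r) ! j) ((y # r) ! Suc j)) = path_length b (y # r)"
    by (simp add: path_length_def)
  finally show ?case using 1 by simp
qed (auto simp: path_length_def)

lemma is_path_succ: "is_path b \<gamma> \<longleftrightarrow> \<gamma> \<noteq> [] \<and> successively (\<lambda>x y. b x y > 0) \<gamma>"
  by (simp add: is_path_def successively_conv_nth)

lemma plen_nonneg: "(\<forall>x y. b x y \<ge> 0) \<Longrightarrow> plen b \<gamma> \<ge> 0"
  by (induction b \<gamma> rule: plen.induct) auto

lemma esum_nonneg: "(\<forall>x y. w x y \<ge> 0) \<Longrightarrow> esum w \<gamma> \<ge> 0"
  by (induction w \<gamma> rule: esum.induct) auto

lemma plen_append: "plen b (xs @ y # ys) = plen b (xs @ [y]) + plen b (y # ys)"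
proof (induction xs rule: induct_list012)
  case (3 x z zs) then show ?case by simp
qed auto

lemma plen_snoc: "xs \<noteq> [] \<Longrightarrow> plen b (xs @ [y]) = plen b xs + 1 / b (last xs) y"
proof -
  assume "xs \<noteq> []"
  then obtain xs' l where xs: "xs = xs' @ [l]" by (metis append_butlast_last_id)
  have "plen b (xs' @ l # [y]) = plen b (xs' @ [l]) + plen b [l, y]" by (rule plen_append)
  then show ?thesis using xs by simp
qed

lemma esum_list: "esum w \<gamma> = sum_list (map (\<lambda>(u,v). w u v) (zip \<gamma> (tl \<gamma>)))"
  by (induction w \<gamma> rule: esum.induct) auto

lemma esum_set: "distinct \<gamma> \<Longrightarrow> esum w \<gamma> = sum (\<lambda>(u,v). w u v) (set (zip \<gamma> (tl \<gamma>)))"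
  by (simp add: esum_list sum_list_distinct_conv_sum_set distinct_zipI1)

lemma zip_tl_not_both:
  assumes "distinct xs" "(u,v) \<in> set (zip xs (tl xs))" "(v,u) \<in> set (zip xs (tl xs))"
  shows False
proof -
  from assms(2) obtain i where i: "i < length xs - 1" "xs ! i = u" "tl xs ! i = v"
    by (auto simp: set_zip)
  from assms(3) obtain j where j: "j < length xs - 1" "xs ! j = v" "tl xs ! j = u"
    by (auto simp: set_zip)
  have "xs ! i = xs ! Suc j" using i j by (simp add: nth_tl)
  hence "i = Suc j" using assms(1) i j by (simp add: nth_eq_iff_index_eq)
  moreover have e2: "xs ! Suc i = xs ! j" using i j by (simp add: nth_tl)
  have l1: "Suc i < length xs" "j < length xs" using i j by auto
  have "Suc i = j" using nth_eq_iff_index_eq[OF assms(1) l1] e2 by simp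
  ultimately show False by simp
qed

lemma zip_tl_set: "(u,v) \<in> set (zip xs (tl xs)) \<Longrightarrow> u \<in> set xs \<and> v \<in> set xs"
  by (metis in_set_zipE list.sel(2) list.set_sel(2))

lemma tele_aux:
  fixes d e P E B :: real
  assumes "d \<ge> 0" "e \<ge> 0" "P \<ge> 0" "E \<ge> 0" "B > 0" "d^2 \<le> P * E"
  shows "(d + e)^2 \<le> (1/B + P) * (B * e^2 + E)"
proof -
  have ex: "(1/B+P)*(B*e^2+E) = e^2 + E/B + P*B*e^2 + P*E" using assms(5) by (simp add: field_simps)
  have sq: "(d+e)^2 = d^2 + 2*d*e + e^2" by (simp add: power2_sum)
  have key: "2*d*e \<le> E/B + P*B*e^2"
  proof (cases "P = 0")
    case True
    then have "d^2 \<le> 0" using assms by simp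
    then have "d^2 = 0" by (meson antisym zero_le_power2)
    then have "d = 0" by simp
    then show ?thesis using assms True by simp
  next
    case False
    hence Pp: "P * B > 0" using assms by simp
    have "0 \<le> (d - P*B*e)^2" by simp
    hence h: "(P*B)*(2*d*e) \<le> d^2 + (P*B)^2*e^2" by (simp add: power2_diff power_mult_distrib algebra_simps)
    have "2*d*e = ((P*B)*(2*d*e)) / (P*B)" using Pp by (metis less_irrefl nonzero_mult_div_cancel_left)
    also have "\<dots> \<le> (d^2 + (P*B)^2*e^2) / (P*B)" by (rule divide_right_mono[OF h]) (use Pp in simp)
    also have "\<dots> = d^2/(P*B) + (P*B)^2*e^2/(P*B)" by (simp add: add_divide_distrib)
    also have "(P*B)^2*e^2/(P*B) = P*B*e^2" using Pp by (simp add: power2_eq_square)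
    also have "d^2/(P*B) \<le> (P*E)/(P*B)" by (rule divide_right_mono[OF assms(6)]) (use Pp in simp)
    also have "(P*E)/(P*B) = E/B" using False by simp
    finally show ?thesis by simp
  qed
  show ?thesis using ex sq key assms(6) by linarith
qed

lemma tele:
  fixes g :: "'a \<Rightarrow> complex"
  assumes b0: "\<forall>x y. b x y \<ge> 0"
  shows "\<gamma> \<noteq> [] \<Longrightarrow> successively (\<lambda>x y. b x y > 0) \<gamma> \<Longrightarrow>
    (cmod (g (last \<gamma>) - g (hd \<gamma>)))^2 \<le> plen b \<gamma> * esum (\<lambda>u v. b u v * (cmod (g u - g v))^2) \<gamma>"
proof (induction \<gamma> rule: induct_list012)
  case (3 x y r)
  let ?W = "\<lambda>u v. b u v * (cmod (g u - g v))^2"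
  have IH: "(cmod (g (last (y#r)) - g y))^2 \<le> plen b (y # r) * esum ?W (y # r)"
    using 3 by simp
  have bp: "b x y > 0" using 3 by simp
  define d where "d = cmod (g (last (y#r)) - g y)"
  define e where "e = cmod (g x - g y)"
  have eq: "g (last (y#r)) - g x = (g (last (y#r)) - g y) + (g y - g x)" by simp
  have tri: "cmod (g (last (y#r)) - g x) \<le> d + e"
    unfolding d_def e_def eq using norm_triangle_ineq norm_minus_commute by metis
  have "(cmod (g (last (x#y#r)) - g (hd (x#y#r))))^2 \<le> (d + e)^2"
    using tri by (simp add: power_mono)
  also have "\<dots> \<le> (1 / b x y + plen b (y#r)) * (b x y * e^2 + esum ?W (y#r))"
  proof (rule tele_aux)
    show "0 \<le> d" "0 \<le> e" by (simp_all add: d_def e_def)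
    show "0 \<le> plen b (y # r)" using plen_nonneg[OF b0] .
    show "0 \<le> esum ?W (y # r)" by (rule esum_nonneg) (use b0 in simp)
    show "0 < b x y" by (rule bp)
    show "d\<^sup>2 \<le> plen b (y # r) * esum ?W (y # r)" using IH by (simp add: d_def)
  qed
  finally show ?case by (simp add: e_def)
qed auto

lemma finite_ge_summable:
  fixes f :: "'a \<Rightarrow> real"
  assumes nn: "\<And>y. f y \<ge> 0" and sm: "f summable_on UNIV" and ep: "\<epsilon> > 0"
  shows "finite {y. f y \<ge> \<epsilon>}"
proof (rule ccontr)
  assume inf: "infinite {y. f y \<ge> \<epsilon>}"
  define n where "n = nat \<lceil>infsum f UNIV / \<epsilon>\<rceil> + 1"
  obtain A where A: "finite A" "card A = n" "A \<subseteq> {y. f y \<ge> \<epsilon>}"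
    using infinite_arbitrarily_large[OF inf] by blast
  have "of_nat (card A) * \<epsilon> \<le> sum f A"
    using A by (intro sum_bounded_below) auto
  also have "sum f A \<le> infsum f UNIV"
    using A sm nn by (intro finite_sum_le_infsum) auto
  finally have "real n * \<epsilon> \<le> infsum f UNIV" using A by simp
  moreover have "infsum f UNIV / \<epsilon> < real n" unfolding n_def by linarith
  hence "infsum f UNIV < real n * \<epsilon>" using ep by (simp add: field_simps)
  ultimately show False by simp
qed

lemma plen_lower:
  assumes Kb: "\<forall>x y. b x y \<le> K" and Kp: "K > 0"
  shows "successively (\<lambda>x y. b x y > 0) \<gamma> \<Longrightarrow> plen b \<gamma> \<ge> (real (length \<gamma>) - 1) / K"
proof (induction \<gamma> rule: induct_list012)
  case (3 x y r)
  have bp: "b x y > 0" "b x y \<le> K" using 3 Kb by auto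
  have "1 / K \<le> 1 / b x y" using bp by (simp add: frac_le)
  moreover have "(real (length (y#r)) - 1) / K \<le> plen b (y # r)" using 3 by simp
  ultimately have "1/K + (real (length (y#r)) - 1) / K \<le> plen b (x # y # r)" by simp
  moreover have "1/K + (real (length (y#r)) - 1) / K = (real (length (x#y#r)) - 1) / K"
    by (simp add: add_divide_distrib)
  ultimately show ?case by simp
qed (use Kp in auto)

lemma finite_paths:
  assumes b0: "\<forall>x y. b x y \<ge> 0" and bsym: "\<forall>x y. b x y = b y x"
    and bsum: "\<forall>x. b x summable_on UNIV" and Lp: "L > 0"
  shows "finite {\<gamma>. \<gamma> \<noteq> [] \<and> successively (\<lambda>x y. b x y > 0) \<gamma> \<and> last \<gamma> = x \<and> length \<gamma> \<le> N \<and> plen b \<gamma> \<le> L}"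
proof (induction N arbitrary: x)
  case 0 then show ?case by simp
next
  case (Suc N)
  let ?PS = "\<lambda>N x. {\<gamma>. \<gamma> \<noteq> [] \<and> successively (\<lambda>x y. b x y > 0) \<gamma> \<and> last \<gamma> = x \<and> length \<gamma> \<le> N \<and> plen b \<gamma> \<le> L}"
  have fin_nb: "finite {y. b x y \<ge> 1/L}"
    using finite_ge_summable[of "b x" "1/L"] b0 bsum Lp by auto
  have sub: "?PS (Suc N) x \<subseteq> {[x]} \<union> (\<Union>y\<in>{y. b x y \<ge> 1/L}. (\<lambda>\<gamma>. \<gamma> @ [x]) ` ?PS N y)"
  proof
    fix \<gamma> assume g: "\<gamma> \<in> ?PS (Suc N) x"
    show "\<gamma> \<in> {[x]} \<union> (\<Union>y\<in>{y. b x y \<ge> 1/L}. (\<lambda>\<gamma>. \<gamma> @ [x]) ` ?PS N y)"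
    proof (cases "length \<gamma> \<le> 1")
      case True
      then obtain z where "\<gamma> = [z]" using g by (cases \<gamma>) auto
      hence "\<gamma> = [x]" using g by simp
      then show ?thesis by blast
    next
      case False
      define \<gamma>' where "\<gamma>' = butlast \<gamma>"
      have gl: "\<gamma> \<noteq> []" "last \<gamma> = x" using g by auto
      have geq: "\<gamma> = \<gamma>' @ [x]" unfolding \<gamma>'_def using gl append_butlast_last_id by metis
      have ne: "\<gamma>' \<noteq> []" using False geq by auto
      have s': "successively (\<lambda>x y. b x y > 0) \<gamma>'" and bl: "b (last \<gamma>') x > 0"
        using g geq ne by (auto simp: successively_append_iff)
      have pl: "plen b \<gamma> = plen b \<gamma>' + 1 / b (last \<gamma>') x" using geq ne plen_snoc by metis
      have p0: "plen b \<gamma>' \<ge> 0" using plen_nonneg b0 by blast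
      have h1: "1 / b (last \<gamma>') x \<ge> 0" using bl by simp
      have gL: "plen b \<gamma> \<le> L" using g by simp
      have pl': "plen b \<gamma>' \<le> L" using pl gL h1 by linarith
      have "1 / b (last \<gamma>') x \<le> L" using pl gL p0 by linarith
      hence "1 / L \<le> b (last \<gamma>') x" using bl Lp by (simp add: field_simps)
      hence "b x (last \<gamma>') \<ge> 1/L" using bsym by simp
      moreover have "\<gamma>' \<in> ?PS N (last \<gamma>')" using ne s' pl' g geq by auto
      ultimately show ?thesis using geq by blast
    qed
  qed
  show ?case
    by (rule finite_subset[OF sub]) (use fin_nb Suc.IH in blast)
qed

lemma exist_path:
  assumes b0: "\<forall>x y. b x y \<ge> 0" and bsym: "\<forall>x y. b x y = b y x"
    and bsum: "\<forall>x. b x summable_on UNIV" and Kb: "\<forall>x y. b x y \<le> K" and Kp: "K > 0"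
    and conn: "graph_connected b" and dense: "rel_dense b D"
  shows "\<exists>\<gamma>. \<gamma> \<noteq> [] \<and> successively (\<lambda>x y. b x y > 0) \<gamma> \<and> hd \<gamma> \<in> D \<and> last \<gamma> = x
     \<and> plen b \<gamma> \<le> covering_radius b D \<and> distinct \<gamma>"
proof -
  define R where "R = covering_radius b D"
  define S where "S = {R. R > 0 \<and> (\<Union>p\<in>D. gball b p R) = UNIV}"
  have RS: "R = Inf S" unfolding R_def S_def covering_radius_def by simp
  have Sne: "S \<noteq> {}" using dense unfolding rel_dense_def S_def by auto
  have Sbdd: "bdd_below S" unfolding S_def by (rule bdd_belowI[of _ 0]) auto
  have R0: "R \<ge> 0" unfolding RS using Sne by (rule cInf_greatest) (auto simp: S_def)
  define good where "good \<gamma> \<longleftrightarrow> \<gamma> \<noteq> [] \<and> successively (\<lambda>x y. b x y > 0) \<gamma> \<and> hd \<gamma> \<in> D \<and> last \<gamma> = x" for \<gamma>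
  have E1: "\<exists>\<gamma>. good \<gamma> \<and> plen b \<gamma> < R + \<epsilon>" if ep: "\<epsilon> > 0" for \<epsilon>
  proof -
    have "Inf S < R + \<epsilon>/2" using RS ep by simp
    then obtain s where s: "s \<in> S" "s < R + \<epsilon>/2" using cInf_lessD[OF Sne] by blast
    then have "x \<in> (\<Union>p\<in>D. gball b p s)" unfolding S_def by auto
    then obtain p where p: "p \<in> D" "gdist b p x \<le> s" unfolding gball_def by auto
    define P where "P = {path_length b \<gamma> | \<gamma>. is_path b \<gamma> \<and> hd \<gamma> = p \<and> last \<gamma> = x}"
    have Pne: "P \<noteq> {}" using conn unfolding graph_connected_def P_def by blast
    have "Inf P < s + \<epsilon>/2" using p ep unfolding gdist_def P_def by simp
    then obtain l where l: "l \<in> P" "l < s + \<epsilon>/2" using cInf_lessD[OF Pne] by blast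
    then obtain \<gamma> where "is_path b \<gamma>" "hd \<gamma> = p" "last \<gamma> = x" "path_length b \<gamma> = l"
      unfolding P_def by blast
    then show ?thesis using p l s unfolding good_def
      by (intro exI[of _ \<gamma>]) (auto simp: is_path_succ path_length_plen)
  qed
  define N where "N = nat \<lceil>(R + 1) * K\<rceil> + 1"
  define LS where "LS = plen b ` {\<gamma>. good \<gamma> \<and> plen b \<gamma> \<le> R + 1}"
  have LSfin: "finite LS"
  proof -
    have "{\<gamma>. good \<gamma> \<and> plen b \<gamma> \<le> R + 1} \<subseteq>
      {\<gamma>. \<gamma> \<noteq> [] \<and> successively (\<lambda>x y. b x y > 0) \<gamma> \<and> last \<gamma> = x \<and> length \<gamma> \<le> N \<and> plen b \<gamma> \<le> R + 1}"
    proof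
      fix \<gamma> assume g: "\<gamma> \<in> {\<gamma>. good \<gamma> \<and> plen b \<gamma> \<le> R + 1}"
      have "(real (length \<gamma>) - 1) / K \<le> plen b \<gamma>"
        using plen_lower[OF Kb Kp] g unfolding good_def by auto
      also have "\<dots> \<le> R + 1" using g by simp
      finally have "real (length \<gamma>) - 1 \<le> (R + 1) * K" using Kp by (simp add: field_simps)
      hence "length \<gamma> \<le> N" unfolding N_def by linarith
      then show "\<gamma> \<in> {\<gamma>. \<gamma> \<noteq> [] \<and> successively (\<lambda>x y. b x y > 0) \<gamma> \<and> last \<gamma> = x \<and> length \<gamma> \<le> N \<and> plen b \<gamma> \<le> R + 1}"
        using g unfolding good_def by auto
    qed
    moreover have "finite {\<gamma>. \<gamma> \<noteq> [] \<and> successively (\<lambda>x y. b x y > 0) \<gamma> \<and> last \<gamma> = x \<and> length \<gamma> \<le> N \<and> plen b \<gamma> \<le> R + 1}"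
      using finite_paths[OF b0 bsym bsum, of "R+1"] R0 by simp
    ultimately show ?thesis unfolding LS_def by (meson finite_imageI finite_subset)
  qed
  have LSne: "LS \<noteq> {}" using E1[of 1] unfolding LS_def by force
  define \<mu> where "\<mu> = Min LS"
  have muLS: "\<mu> \<in> LS" unfolding \<mu>_def using LSfin LSne by simp
  have muR: "\<mu> \<le> R"
  proof (rule ccontr)
    assume "\<not> \<mu> \<le> R"
    define \<epsilon> where "\<epsilon> = min 1 (\<mu> - R)"
    have "\<epsilon> > 0" using \<open>\<not> \<mu> \<le> R\<close> unfolding \<epsilon>_def by simp
    then obtain \<gamma> where g: "good \<gamma>" "plen b \<gamma> < R + \<epsilon>" using E1 by blast
    have "plen b \<gamma> \<in> LS" using g unfolding LS_def \<epsilon>_def by force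
    hence "\<mu> \<le> plen b \<gamma>" unfolding \<mu>_def using LSfin by simp
    then show False using g unfolding \<epsilon>_def by simp
  qed
  have ex1: "\<exists>\<gamma>. good \<gamma> \<and> plen b \<gamma> \<le> R" using muLS muR unfolding LS_def by auto
  from ex1 obtain \<gamma>0 where "good \<gamma>0 \<and> plen b \<gamma>0 \<le> R" by blast
  from ex_has_least_nat[of "\<lambda>\<gamma>. good \<gamma> \<and> plen b \<gamma> \<le> R", OF this, of length]
  obtain \<gamma> where g: "good \<gamma> \<and> plen b \<gamma> \<le> R" and leastA: "\<forall>\<gamma>'. good \<gamma>' \<and> plen b \<gamma>' \<le> R \<longrightarrow> length \<gamma> \<le> length \<gamma>'"
    by blast
  have least: "\<And>\<gamma>'. good \<gamma>' \<and> plen b \<gamma>' \<le> R \<Longrightarrow> length \<gamma> \<le> length \<gamma>'" using leastA by blast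
  have dist: "distinct \<gamma>"
  proof (rule ccontr)
    assume "\<not> distinct \<gamma>"
    then obtain xs ys zs y where geq: "\<gamma> = xs @ [y] @ ys @ [y] @ zs" using not_distinct_decomp by blast
    define \<gamma>' where "\<gamma>' = xs @ y # zs"
    have succ: "successively (\<lambda>x y. b x y > 0) (xs @ y # ys @ y # zs)" using g geq unfolding good_def by simp
    have e1: "xs @ y # ys @ y # zs = (xs @ [y]) @ (ys @ y # zs)" by simp
    have s1: "successively (\<lambda>x y. b x y > 0) (xs @ [y])"
      using succ unfolding e1 successively_append_iff by blast
    have e2: "xs @ y # ys @ y # zs = (xs @ y # ys) @ (y # zs)" by simp
    have s2: "successively (\<lambda>x y. b x y > 0) (y # zs)"
      using succ unfolding e2 successively_append_iff by blast
    have "successively (\<lambda>x y. b x y > 0) \<gamma>'"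
      unfolding \<gamma>'_def using s1 s2 by (auto simp: successively_append_iff)
    moreover have "hd \<gamma>' = hd \<gamma>" unfolding \<gamma>'_def geq by (cases xs) auto
    moreover have "last \<gamma>' = last \<gamma>" unfolding \<gamma>'_def geq by (cases zs) auto
    moreover have "plen b \<gamma>' \<le> plen b \<gamma>"
    proof -
      have "plen b \<gamma> = plen b (xs @ [y]) + plen b ((y # ys) @ y # zs)" unfolding geq
        using plen_append[of b xs y "ys @ y # zs"] by simp
      also have "plen b ((y # ys) @ y # zs) = plen b ((y # ys) @ [y]) + plen b (y # zs)"
        by (rule plen_append)
      finally have "plen b \<gamma> = plen b (xs @ [y]) + plen b ((y # ys) @ [y]) + plen b (y # zs)" by simp
      moreover have "plen b \<gamma>' = plen b (xs @ [y]) + plen b (y # zs)" unfolding \<gamma>'_def by (rule plen_append)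
      moreover have "plen b ((y # ys) @ [y]) \<ge> 0" using plen_nonneg b0 by blast
      ultimately show ?thesis by simp
    qed
    ultimately have "good \<gamma>' \<and> plen b \<gamma>' \<le> R" using g unfolding good_def \<gamma>'_def by auto
    hence "length \<gamma> \<le> length \<gamma>'" by (rule least)
    then show False unfolding geq \<gamma>'_def by simp
  qed
  show ?thesis using g dist unfolding good_def R_def by blast
qed

lemma suffix_gdist:
  assumes b0: "\<forall>x y. b x y \<ge> 0" and ne: "\<gamma> \<noteq> []" and s: "successively (\<lambda>x y. b x y > 0) \<gamma>"
    and u: "u \<in> set \<gamma>" and pl: "plen b \<gamma> \<le> R"
  shows "gdist b u (last \<gamma>) \<le> R"
proof -
  obtain pre suf where geq: "\<gamma> = pre @ u # suf" using split_list[OF u] by blast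
  have s2: "successively (\<lambda>x y. b x y > 0) (u # suf)"
    using s unfolding geq successively_append_iff by blast
  have "plen b \<gamma> = plen b (pre @ [u]) + plen b (u # suf)" unfolding geq by (rule plen_append)
  moreover have "plen b (pre @ [u]) \<ge> 0" using plen_nonneg b0 by blast
  ultimately have le: "plen b (u # suf) \<le> R" using pl by simp
  have lst: "last (u # suf) = last \<gamma>" unfolding geq by simp
  have mem: "path_length b (u # suf) \<in> {path_length b \<delta> | \<delta>. is_path b \<delta> \<and> hd \<delta> = u \<and> last \<delta> = last \<gamma>}"
    using s2 lst by (auto simp: is_path_succ)
  have bdd: "bdd_below {path_length b \<delta> | \<delta>. is_path b \<delta> \<and> hd \<delta> = u \<and> last \<delta> = last \<gamma>}"
    by (rule bdd_belowI[of _ 0]) (auto simp: path_length_plen intro: plen_nonneg[OF b0])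
  have "gdist b u (last \<gamma>) \<le> path_length b (u # suf)"
    unfolding gdist_def using cInf_lower[OF mem bdd] .
  then show ?thesis using le by (simp add: path_length_plen)
qed

lemma hardy:
  fixes b :: "'a \<Rightarrow> 'a \<Rightarrow> real" and m :: "'a \<Rightarrow> real" and g :: "'a \<Rightarrow> complex"
  assumes b0: "\<forall>x y. b x y \<ge> 0" and bsym: "\<forall>x y. b x y = b y x" and m0: "\<forall>x. m x > 0"
    and paths: "\<forall>x. x \<notin> D \<longrightarrow> \<gamma> x \<noteq> [] \<and> successively (\<lambda>x y. b x y > 0) (\<gamma> x) \<and> hd (\<gamma> x) \<in> D
        \<and> last (\<gamma> x) = x \<and> plen b (\<gamma> x) \<le> R \<and> distinct (\<gamma> x)"
    and g0: "\<forall>x\<in>D. g x = 0"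
    and Wsum: "(\<lambda>e. b (fst e) (snd e) * (cmod (g (fst e) - g (snd e)))^2) summable_on UNIV"
    and msum: "(\<lambda>x. m x * (cmod (g x))^2) summable_on UNIV"
    and R0: "R \<ge> 0" and Vol0: "Vol \<ge> 0"
    and vol: "\<forall>u A. finite A \<longrightarrow> A \<subseteq> gball b u R \<longrightarrow> sum m A \<le> Vol"
  shows "(\<Sum>\<^sub>\<infinity>x. m x * (cmod (g x))^2) \<le> R * Vol * (1/2) * (\<Sum>\<^sub>\<infinity>e. b (fst e) (snd e) * (cmod (g (fst e) - g (snd e)))^2)"
proof -
  define W where "W e = b (fst e) (snd e) * (cmod (g (fst e) - g (snd e)))^2" for e
  define E where "E x = set (zip (\<gamma> x) (tl (\<gamma> x)))" for x
  have W0: "W e \<ge> 0" for e using b0 unfolding W_def by simp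
  have Wsw: "W (prod.swap e) = W e" for e
    unfolding W_def using bsym by (simp add: norm_minus_commute)
  have finE: "finite (E x)" for x unfolding E_def by simp
  have px: "(cmod (g x))^2 \<le> R * sum W (E x)" if x: "x \<notin> D" for x
  proof -
    have p: "\<gamma> x \<noteq> []" "successively (\<lambda>x y. b x y > 0) (\<gamma> x)" "hd (\<gamma> x) \<in> D" "last (\<gamma> x) = x"
       "plen b (\<gamma> x) \<le> R" "distinct (\<gamma> x)" using paths x by auto
    have "(cmod (g (last (\<gamma> x)) - g (hd (\<gamma> x))))^2
        \<le> plen b (\<gamma> x) * esum (\<lambda>u v. b u v * (cmod (g u - g v))^2) (\<gamma> x)"
      by (rule tele[OF b0 p(1,2)])
    also have "esum (\<lambda>u v. b u v * (cmod (g u - g v))^2) (\<gamma> x) = sum W (E x)"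
      unfolding esum_set[OF p(6)] E_def W_def by (intro sum.cong) auto
    also have "plen b (\<gamma> x) * sum W (E x) \<le> R * sum W (E x)"
      using p(5) W0 by (intro mult_right_mono sum_nonneg) auto
    finally show ?thesis using p g0 by simp
  qed
  define SW where "SW = (\<Sum>\<^sub>\<infinity>e. W e)"
  have Wsum': "W summable_on UNIV" using Wsum unfolding W_def .
  have fin: "(\<Sum>x\<in>F. m x * (cmod (g x))^2) \<le> R * Vol * (1/2) * SW" if F: "finite F" for F
  proof -
    define F' where "F' = F - D"
    have finF': "finite F'" using F unfolding F'_def by simp
    define U where "U = (\<Union>x\<in>F'. E x)"
    have finU: "finite U" unfolding U_def using finF' finE by simp
    define U' where "U' = U \<union> prod.swap ` U"
    have finU': "finite U'" unfolding U'_def using finU by simp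
    define T where "T e = (\<Sum>x\<in>{x\<in>F'. e \<in> E x}. m x)" for e
    have T0: "T e \<ge> 0" for e unfolding T_def using m0 by (simp add: sum_nonneg less_imp_le)
    define S0 where "S0 = (\<Sum>x\<in>F'. \<Sum>e\<in>E x. m x * W e)"
    have "(\<Sum>x\<in>F. m x * (cmod (g x))^2) = (\<Sum>x\<in>F'. m x * (cmod (g x))^2)"
      unfolding F'_def using F g0 by (intro sum.mono_neutral_right) auto
    also have "\<dots> \<le> (\<Sum>x\<in>F'. m x * (R * sum W (E x)))"
      using px m0 unfolding F'_def by (intro sum_mono mult_left_mono) (auto simp: less_imp_le)
    also have "\<dots> = R * S0"
      unfolding S0_def by (simp add: sum_distrib_left mult_ac)
    finally have st1: "(\<Sum>x\<in>F. m x * (cmod (g x))^2) \<le> R * S0" .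
    have "S0 = (\<Sum>x\<in>F'. \<Sum>e\<in>{e. e \<in> U \<and> e \<in> E x}. m x * W e)"
      unfolding U_def S0_def by (intro sum.cong) auto
    also have "\<dots> = (\<Sum>e\<in>U. \<Sum>x\<in>{x. x \<in> F' \<and> e \<in> E x}. m x * W e)"
      by (rule sum.swap_restrict[OF finF' finU])
    also have "\<dots> = (\<Sum>e\<in>U. W e * T e)"
      unfolding T_def by (simp add: sum_distrib_left mult_ac)
    also have "\<dots> \<le> (\<Sum>e\<in>U'. W e * T e)"
      using finU' W0 T0 unfolding U'_def by (intro sum_mono2) auto
    finally have st2: "S0 \<le> (\<Sum>e\<in>U'. W e * T e)" .
    have st3: "2 * (\<Sum>e\<in>U'. W e * T e) = (\<Sum>e\<in>U'. W e * (T e + T (prod.swap e)))"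
    proof -
      have bij: "bij_betw prod.swap U' U'" unfolding U'_def
        by (rule bij_betwI[of _ _ _ prod.swap]) auto
      have "(\<Sum>e\<in>U'. W e * T (prod.swap e)) = (\<Sum>e\<in>U'. W (prod.swap e) * T (prod.swap e))"
        using Wsw by simp
      also have "\<dots> = (\<Sum>e\<in>U'. W e * T e)"
        using sum.reindex_bij_betw[OF bij, of "\<lambda>e. W e * T e"] by simp
      finally have "(\<Sum>e\<in>U'. W e * T (prod.swap e)) = (\<Sum>e\<in>U'. W e * T e)" .
      then show ?thesis by (simp add: distrib_left sum.distrib)
    qed
    have "(\<Sum>e\<in>U'. W e * (T e + T (prod.swap e))) \<le> (\<Sum>e\<in>U'. W e * Vol)"
    proof (intro sum_mono mult_left_mono W0)
      fix e assume "e \<in> U'"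
      obtain u v where e: "e = (u, v)" by (cases e)
      define A1 where "A1 = {x\<in>F'. (u,v) \<in> E x}"
      define A2 where "A2 = {x\<in>F'. (v,u) \<in> E x}"
      have disj: "A1 \<inter> A2 = {}"
      proof -
        { fix x assume "x \<in> A1" "x \<in> A2"
          hence "x \<notin> D" "(u,v) \<in> E x" "(v,u) \<in> E x" unfolding A1_def A2_def F'_def by auto
          hence False using paths zip_tl_not_both unfolding E_def by metis }
        then show ?thesis by blast
      qed
      have sub: "A1 \<union> A2 \<subseteq> gball b u R"
      proof
        fix x assume x: "x \<in> A1 \<union> A2"
        hence xD: "x \<notin> D" unfolding A1_def A2_def F'_def by auto
        have p: "\<gamma> x \<noteq> []" "successively (\<lambda>x y. b x y > 0) (\<gamma> x)" "last (\<gamma> x) = x" "plen b (\<gamma> x) \<le> R"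
          using paths xD by auto
        have "u \<in> set (\<gamma> x)" using x zip_tl_set unfolding A1_def A2_def E_def by fastforce
        from suffix_gdist[OF b0 p(1,2) this p(4)] p(3) show "x \<in> gball b u R"
          unfolding gball_def by simp
      qed
      have finA: "finite (A1 \<union> A2)" unfolding A1_def A2_def using finF' by simp
      have "T e + T (prod.swap e) = sum m A1 + sum m A2"
        unfolding T_def A1_def A2_def e by simp
      also have "\<dots> = sum m (A1 \<union> A2)"
        using finA disj by (simp add: sum.union_disjoint)
      also have "\<dots> \<le> Vol" using vol finA sub by blast
      finally show "T e + T (prod.swap e) \<le> Vol" .
    qed
    also have "(\<Sum>e\<in>U'. W e * Vol) = Vol * (\<Sum>e\<in>U'. W e)"
      by (simp add: sum_distrib_left mult_ac)
    finally have st4: "(\<Sum>e\<in>U'. W e * (T e + T (prod.swap e))) \<le> Vol * (\<Sum>e\<in>U'. W e)" .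
    have st5: "(\<Sum>e\<in>U'. W e) \<le> SW"
      unfolding SW_def using Wsum' finU' W0 by (intro finite_sum_le_infsum) auto
    have "Vol * (\<Sum>e\<in>U'. W e) \<le> Vol * SW" using st5 Vol0 by (rule mult_left_mono)
    hence "S0 \<le> Vol * SW / 2" using st2 st3 st4 by linarith
    hence "R * S0 \<le> R * (Vol * SW / 2)" using R0 by (rule mult_left_mono)
    then show ?thesis using st1 by simp
  qed
  have "(\<Sum>\<^sub>\<infinity>x. m x * (cmod (g x))^2) \<le> R * Vol * (1/2) * SW"
    using msum fin by (intro infsum_le_finite_sums) auto
  then show ?thesis unfolding SW_def W_def .
qed

lemma gs_point:
  fixes u v :: complex and p q :: real
  shows "(cmod (of_real p * u - of_real q * v))^2 = p*q*(cmod(u - v))^2 + p*(p-q)*(cmod u)^2 + q*(q-p)*(cmod v)^2"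
  by (simp only: cmod_power2) (simp add: power2_eq_square algebra_simps)

lemma sq_diff_le:
  fixes a b :: complex
  shows "(cmod (a - b))^2 \<le> 2 * (cmod a)^2 + 2 * (cmod b)^2"
proof -
  have "cmod (a - b) \<le> cmod a + cmod b" by (rule norm_triangle_ineq4)
  hence "(cmod (a - b))^2 \<le> (cmod a + cmod b)^2" by (simp add: power_mono)
  also have "\<dots> = (cmod a)^2 + 2 * cmod a * cmod b + (cmod b)^2" by (simp add: power2_sum)
  also have "\<dots> \<le> 2 * (cmod a)^2 + 2 * (cmod b)^2"
    using sum_squares_bound[of "cmod a" "cmod b"] by linarith
  finally show ?thesis .
qed

lemma summable_dom:
  fixes h k :: "'b \<Rightarrow> real"
  assumes "k summable_on A" "\<And>x. x \<in> A \<Longrightarrow> \<bar>h x\<bar> \<le> k x"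
  shows "h summable_on A"
proof -
  have "(\<lambda>x. norm (h x)) summable_on A"
    by (rule summable_on_comparison_test[OF assms(1)]) (use assms(2) in auto)
  then show ?thesis using summable_on_iff_abs_summable_on_real by blast
qed

lemma infsum_diff':
  fixes f g :: "'b \<Rightarrow> real"
  assumes "f summable_on A" "g summable_on A"
  shows "infsum (\<lambda>x. f x - g x) A = infsum f A - infsum g A"
proof -
  have "infsum (\<lambda>x. f x + (- g x)) A = infsum f A + infsum (\<lambda>x. - g x) A"
    using assms by (intro infsum_add) (auto simp: summable_on_uminus)
  then show ?thesis by (simp add: infsum_uminus)
qed

lemma L1:
  fixes b :: "'a \<Rightarrow> 'a \<Rightarrow> real"
  assumes b0: "\<forall>x y. b x y \<ge> 0" and bsum: "\<forall>x. b x summable_on UNIV"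
    and deg: "\<forall>x. (\<Sum>\<^sub>\<infinity>y. b x y) \<le> CB * m x"
    and a0: "\<forall>x. a x \<ge> 0" and am: "(\<lambda>x. a x * m x) summable_on UNIV"
  shows "(\<lambda>(x,y). b x y * a x) summable_on UNIV"
proof -
  have "(\<lambda>(x,y). b x y * a x) summable_on Sigma UNIV (\<lambda>_. UNIV)"
  proof (rule summable_on_SigmaI[where g = "\<lambda>x. (\<Sum>\<^sub>\<infinity>y. b x y) * a x"])
    fix x :: 'a
    show "((\<lambda>y. case (x, y) of (x, y) \<Rightarrow> b x y * a x) has_sum (\<Sum>\<^sub>\<infinity>y. b x y) * a x) UNIV"
      using has_sum_cmult_left[OF has_sum_infsum[OF bsum[rule_format, of x]], of "a x"] by simp
  next
    show "(\<lambda>x. (\<Sum>\<^sub>\<infinity>y. b x y) * a x) summable_on UNIV"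
    proof (rule summable_on_comparison_test)
      show "(\<lambda>x. CB * (a x * m x)) summable_on UNIV" using am by (rule summable_on_cmult_right)
      fix x
      show "(\<Sum>\<^sub>\<infinity>y. b x y) * a x \<le> CB * (a x * m x)"
        using mult_right_mono[OF deg[rule_format, of x] a0[rule_format, of x]] by (simp add: mult_ac)
      show "0 \<le> (\<Sum>\<^sub>\<infinity>y. b x y) * a x" using b0 a0 by (simp add: infsum_nonneg)
    qed
  next
    fix x y show "0 \<le> (case (x, y) of (x, y) \<Rightarrow> b x y * a x)" using b0 a0 by simp
  qed
  then show ?thesis by simp
qed

lemma L1':
  fixes b :: "'a \<Rightarrow> 'a \<Rightarrow> real"
  assumes "(\<lambda>(x,y). b x y * a x) summable_on UNIV" and bsym: "\<forall>x y. b x y = b y x"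
  shows "(\<lambda>(x,y). b x y * a y) summable_on UNIV"
proof -
  have "(\<lambda>(x,y). b x y * a x) summable_on (UNIV \<times> UNIV)" using assms(1) by simp
  hence "(\<lambda>(x,y). (\<lambda>(x,y). b x y * a x) (y,x)) summable_on (UNIV \<times> UNIV)"
    using summable_on_swap by blast
  hence "(\<lambda>(x,y). b y x * a y) summable_on UNIV" by simp
  then show ?thesis using bsym by simp
qed

lemma gs_ineq:
  fixes b :: "'a \<Rightarrow> 'a \<Rightarrow> real" and m V \<phi> :: "'a \<Rightarrow> real" and f :: "'a \<Rightarrow> complex"
  assumes b0: "\<forall>x y. b x y \<ge> 0" and bsym: "\<forall>x y. b x y = b y x" and bsum: "\<forall>x. b x summable_on UNIV"
    and deg: "\<forall>x. (\<Sum>\<^sub>\<infinity>y. b x y) \<le> CB * m x" and m0: "\<forall>x. m x > 0"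
    and phi: "\<forall>x. 1/c \<le> \<phi> x \<and> \<phi> x \<le> c" and c1: "c \<ge> 1"
    and phisum: "\<forall>x. (\<lambda>y. b x y * \<phi> y) summable_on UNIV"
    and gs: "\<forall>x. (1 / m x) * ((\<Sum>\<^sub>\<infinity>y. b x y * (\<phi> x - \<phi> y)) + V x * \<phi> x) - lam * \<phi> x \<ge> 0"
    and fl2: "(\<lambda>x. (cmod (f x))^2 * m x) summable_on UNIV"
    and Vsum: "(\<lambda>x. V x * (cmod (f x))^2) summable_on UNIV"
  shows "energy_V b V f - lam * l2_norm_sq m f \<ge>
     (1/(2*c^2)) * (\<Sum>\<^sub>\<infinity>e. b (fst e) (snd e) * (cmod (f (fst e) / of_real (\<phi> (fst e)) - f (snd e) / of_real (\<phi> (snd e))))^2)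
   \<and> (\<lambda>e. b (fst e) (snd e) * (cmod (f (fst e) / of_real (\<phi> (fst e)) - f (snd e) / of_real (\<phi> (snd e))))^2) summable_on UNIV
   \<and> (\<lambda>x. m x * (cmod (f x / of_real (\<phi> x)))^2) summable_on UNIV"
proof -
  define g where "g x = f x / complex_of_real (\<phi> x)" for x
  define nf where "nf x = (cmod (f x))^2" for x
  define ng where "ng x = (cmod (g x))^2" for x
  have c0: "c > 0" using c1 by simp
  have phip: "\<phi> x > 0" for x using phi c0 by (meson less_le_trans zero_less_divide_1_iff)
  have phic: "\<phi> x \<le> c" for x using phi by blast
  have fg: "f x = complex_of_real (\<phi> x) * g x" for x
    unfolding g_def using phip[of x] by simp
  have nfng: "nf x = (\<phi> x)^2 * ng x" for x
    unfolding nf_def ng_def by (subst fg) (simp add: norm_mult power_mult_distrib abs_of_pos[OF phip])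
  have nf0: "nf x \<ge> 0" for x unfolding nf_def by simp
  have ng0: "ng x \<ge> 0" for x unfolding ng_def by simp
  have ngle: "ng x \<le> c^2 * nf x" for x
  proof -
    have "c * \<phi> x \<ge> 1" using phi c0 by (simp add: field_simps)
    hence "(c * \<phi> x)^2 \<ge> 1" by (simp add: one_le_power)
    hence "ng x \<le> (c * \<phi> x)^2 * ng x" using ng0[of x] by (simp add: mult_le_cancel_right1)
    then show ?thesis using nfng by (simp add: power_mult_distrib mult_ac)
  qed
  have nfm: "(\<lambda>x. nf x * m x) summable_on UNIV" using fl2 unfolding nf_def .
  have ngm: "(\<lambda>x. ng x * m x) summable_on UNIV"
  proof (rule summable_on_comparison_test)
    show "(\<lambda>x. c^2 * (nf x * m x)) summable_on UNIV" using nfm by (rule summable_on_cmult_right)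
    fix x show "ng x * m x \<le> c^2 * (nf x * m x)"
      using mult_right_mono[OF ngle[of x], of "m x"] m0 by (simp add: mult_ac less_imp_le)
    show "0 \<le> ng x * m x" using ng0 m0 by (simp add: less_imp_le)
  qed
  have S1: "(\<lambda>(x,y). b x y * nf x) summable_on UNIV" by (rule L1[OF b0 bsum deg]) (use nf0 nfm in auto)
  have S2: "(\<lambda>(x,y). b x y * nf y) summable_on UNIV" by (rule L1'[OF S1 bsym])
  have T1: "(\<lambda>(x,y). b x y * ng x) summable_on UNIV" by (rule L1[OF b0 bsum deg]) (use ng0 ngm in auto)
  have T2: "(\<lambda>(x,y). b x y * ng y) summable_on UNIV" by (rule L1'[OF T1 bsym])
  define P where "P = (\<lambda>(x,y). b x y * (cmod (f x - f y))^2)"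
  define Q where "Q = (\<lambda>(x,y). b x y * (\<phi> x * \<phi> y * (cmod (g x - g y))^2))"
  define Wp where "Wp = (\<lambda>(x,y). b x y * (cmod (g x - g y))^2)"
  define Rr where "Rr = (\<lambda>(x,y). b x y * (\<phi> x * (\<phi> x - \<phi> y) * ng x))"
  define Rs where "Rs = (\<lambda>(x,y). b x y * (\<phi> y * (\<phi> y - \<phi> x) * ng y))"
  have Psum: "P summable_on UNIV"
  proof (rule summable_on_comparison_test)
    show "(\<lambda>z. 2 * (case z of (x,y) \<Rightarrow> b x y * nf x) + 2 * (case z of (x,y) \<Rightarrow> b x y * nf y)) summable_on UNIV"
      using S1 S2 by (intro summable_on_add summable_on_cmult_right)
    fix z :: "'a \<times> 'a"
    obtain x y where z: "z = (x,y)" by (cases z)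
    have "b x y * (cmod (f x - f y))^2 \<le> b x y * (2 * nf x + 2 * nf y)"
      using sq_diff_le[of "f x" "f y"] b0 unfolding nf_def by (intro mult_left_mono) auto
    then show "P z \<le> 2 * (case z of (x,y) \<Rightarrow> b x y * nf x) + 2 * (case z of (x,y) \<Rightarrow> b x y * nf y)"
      unfolding P_def z by (simp add: algebra_simps)
    show "0 \<le> P z" unfolding P_def z using b0 by simp
  qed
  have Wsum: "Wp summable_on UNIV"
  proof (rule summable_on_comparison_test)
    show "(\<lambda>z. 2 * (case z of (x,y) \<Rightarrow> b x y * ng x) + 2 * (case z of (x,y) \<Rightarrow> b x y * ng y)) summable_on UNIV"
      using T1 T2 by (intro summable_on_add summable_on_cmult_right)
    fix z :: "'a \<times> 'a"
    obtain x y where z: "z = (x,y)" by (cases z)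
    have "b x y * (cmod (g x - g y))^2 \<le> b x y * (2 * ng x + 2 * ng y)"
      using sq_diff_le[of "g x" "g y"] b0 unfolding ng_def by (intro mult_left_mono) auto
    then show "Wp z \<le> 2 * (case z of (x,y) \<Rightarrow> b x y * ng x) + 2 * (case z of (x,y) \<Rightarrow> b x y * ng y)"
      unfolding Wp_def z by (simp add: algebra_simps)
    show "0 \<le> Wp z" unfolding Wp_def z using b0 by simp
  qed
  have Qsum: "Q summable_on UNIV"
  proof (rule summable_on_comparison_test)
    show "(\<lambda>z. c^2 * Wp z) summable_on UNIV" using Wsum by (rule summable_on_cmult_right)
    fix z :: "'a \<times> 'a"
    obtain x y where z: "z = (x,y)" by (cases z)
    have "\<phi> x * \<phi> y \<le> c * c" using phic phip c0 by (intro mult_mono) (auto simp: less_imp_le)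
    hence "\<phi> x * \<phi> y * (cmod (g x - g y))^2 \<le> c^2 * (cmod (g x - g y))^2"
      by (intro mult_right_mono) (auto simp: power2_eq_square)
    hence "b x y * (\<phi> x * \<phi> y * (cmod (g x - g y))^2) \<le> b x y * (c^2 * (cmod (g x - g y))^2)"
      using b0 by (intro mult_left_mono) auto
    then show "Q z \<le> c^2 * Wp z" unfolding Q_def Wp_def z by (simp add: mult_ac)
    show "0 \<le> Q z" unfolding Q_def z using b0 phip by (simp add: less_imp_le)
  qed
  have Rrsum: "Rr summable_on UNIV"
  proof (rule summable_dom)
    show "(\<lambda>z. c^2 * (case z of (x,y) \<Rightarrow> b x y * ng x)) summable_on UNIV"
      using T1 by (rule summable_on_cmult_right)
    fix z :: "'a \<times> 'a"
    obtain x y where z: "z = (x,y)" by (cases z)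
    have d: "\<bar>\<phi> x - \<phi> y\<bar> \<le> c" using phic phip by (smt (verit))
    have "\<bar>\<phi> x * (\<phi> x - \<phi> y)\<bar> \<le> c * c"
      using d phic phip by (simp add: abs_mult abs_of_pos) (intro mult_mono, auto simp: less_imp_le)
    hence "\<bar>\<phi> x * (\<phi> x - \<phi> y)\<bar> * ng x \<le> c^2 * ng x"
      using ng0 by (intro mult_right_mono) (auto simp: power2_eq_square)
    hence "b x y * (\<bar>\<phi> x * (\<phi> x - \<phi> y)\<bar> * ng x) \<le> b x y * (c^2 * ng x)"
      using b0 by (intro mult_left_mono) auto
    then show "\<bar>Rr z\<bar> \<le> c^2 * (case z of (x,y) \<Rightarrow> b x y * ng x)"
      unfolding Rr_def z using b0 ng0 by (simp add: abs_mult mult_ac)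
  qed
  have Rr_has: "(Rr has_sum infsum Rr UNIV) (UNIV \<times> UNIV)" using Rrsum by (simp add: has_sum_infsum)
  hence "((\<lambda>(x,y). Rr (y,x)) has_sum infsum Rr UNIV) (UNIV \<times> UNIV)" using has_sum_swap by blast
  moreover have "(\<lambda>(x,y). Rr (y,x)) = Rs" unfolding Rr_def Rs_def using bsym by (auto simp: fun_eq_iff)
  ultimately have Rs_has: "(Rs has_sum infsum Rr UNIV) UNIV" by simp
  have Rssum: "Rs summable_on UNIV" using Rs_has summable_on_def by blast
  have RsRr: "infsum Rs UNIV = infsum Rr UNIV" using Rs_has infsumI by blast
  have Pdec: "P z = Q z + Rr z + Rs z" for z
  proof -
    obtain x y where z: "z = (x,y)" by (cases z)
    have eq: "(cmod (f x - f y))^2 = \<phi> x * \<phi> y * (cmod (g x - g y))^2 + \<phi> x * (\<phi> x - \<phi> y) * ng x + \<phi> y * (\<phi> y - \<phi> x) * ng y"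
      unfolding ng_def by (subst (1 2) fg) (rule gs_point)
    show ?thesis unfolding P_def Q_def Rr_def Rs_def z by (simp only: prod.case eq) (simp add: algebra_simps)
  qed
  have sumP: "infsum P UNIV = infsum Q UNIV + 2 * infsum Rr UNIV"
  proof -
    have Peq: "P = (\<lambda>z. (Q z + Rr z) + Rs z)" by (rule ext) (rule Pdec)
    have "infsum P UNIV = infsum (\<lambda>z. (Q z + Rr z) + Rs z) UNIV" by (simp only: Peq)
    also have "\<dots> = infsum (\<lambda>z. Q z + Rr z) UNIV + infsum Rs UNIV"
      using Qsum Rrsum Rssum by (intro infsum_add summable_on_add)
    also have "infsum (\<lambda>z. Q z + Rr z) UNIV = infsum Q UNIV + infsum Rr UNIV"
      using Qsum Rrsum by (intro infsum_add)
    finally show ?thesis using RsRr by simp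
  qed
  define Dg where "Dg x = (\<Sum>\<^sub>\<infinity>y. b x y * (\<phi> x - \<phi> y))" for x
  have inner_sum: "(\<lambda>y. Rr (x,y)) summable_on UNIV" for x
  proof -
    have "(\<lambda>y. b x y * \<phi> x + (- (b x y * \<phi> y))) summable_on UNIV"
      using bsum phisum by (intro summable_on_add summable_on_cmult_left) (auto simp: summable_on_uminus)
    hence "(\<lambda>y. (b x y * \<phi> x + (- (b x y * \<phi> y))) * (\<phi> x * ng x)) summable_on UNIV"
      by (rule summable_on_cmult_left)
    then show ?thesis unfolding Rr_def by (simp add: algebra_simps)
  qed
  have inner_eq: "(\<Sum>\<^sub>\<infinity>y. Rr (x,y)) = Dg x * (\<phi> x * ng x)" for x
  proof -
    have "(\<Sum>\<^sub>\<infinity>y. Rr (x,y)) = (\<Sum>\<^sub>\<infinity>y. b x y * (\<phi> x - \<phi> y) * (\<phi> x * ng x))"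
      unfolding Rr_def by (simp add: mult_ac)
    also have "\<dots> = Dg x * (\<phi> x * ng x)" unfolding Dg_def by (rule infsum_cmult_left')
    finally show ?thesis .
  qed
  have RrSigma: "Rr summable_on Sigma UNIV (\<lambda>_. UNIV)" using Rrsum by simp
  have DXsum: "(\<lambda>x. Dg x * (\<phi> x * ng x)) summable_on UNIV"
    using summable_on_SigmaD[OF RrSigma inner_sum] inner_eq by simp
  have sumRr: "infsum Rr UNIV = (\<Sum>\<^sub>\<infinity>x. Dg x * (\<phi> x * ng x))"
    using infsum_Sigma_banach[OF RrSigma] inner_eq by simp
  have E: "energy_V b V f = (1/2) * infsum P UNIV + (\<Sum>\<^sub>\<infinity>x. V x * nf x)"
    unfolding energy_V_def P_def nf_def by simp
  have N: "l2_norm_sq m f = (\<Sum>\<^sub>\<infinity>x. nf x * m x)" unfolding l2_norm_sq_def nf_def by simp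
  have Vsum': "(\<lambda>x. V x * nf x) summable_on UNIV" using Vsum unfolding nf_def .
  have lamN: "lam * (\<Sum>\<^sub>\<infinity>x. nf x * m x) = (\<Sum>\<^sub>\<infinity>x. lam * (nf x * m x))"
    by (simp add: infsum_cmult_right')
  have "energy_V b V f - lam * l2_norm_sq m f - (1/2) * infsum Q UNIV
      = (\<Sum>\<^sub>\<infinity>x. Dg x * (\<phi> x * ng x)) + (\<Sum>\<^sub>\<infinity>x. V x * nf x) - (\<Sum>\<^sub>\<infinity>x. lam * (nf x * m x))"
    using E N sumP sumRr lamN by (simp add: field_simps)
  also have "\<dots> = (\<Sum>\<^sub>\<infinity>x. Dg x * (\<phi> x * ng x) + V x * nf x - lam * (nf x * m x))"
  proof -
    have s3: "(\<lambda>x. lam * (nf x * m x)) summable_on UNIV" using nfm by (rule summable_on_cmult_right)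
    have "(\<Sum>\<^sub>\<infinity>x. Dg x * (\<phi> x * ng x) + V x * nf x) = (\<Sum>\<^sub>\<infinity>x. Dg x * (\<phi> x * ng x)) + (\<Sum>\<^sub>\<infinity>x. V x * nf x)"
      using DXsum Vsum' by (rule infsum_add)
    moreover have "(\<Sum>\<^sub>\<infinity>x. (Dg x * (\<phi> x * ng x) + V x * nf x) - lam * (nf x * m x))
        = (\<Sum>\<^sub>\<infinity>x. Dg x * (\<phi> x * ng x) + V x * nf x) - (\<Sum>\<^sub>\<infinity>x. lam * (nf x * m x))"
      using summable_on_add[OF DXsum Vsum'] s3 by (rule infsum_diff')
    ultimately show ?thesis by simp
  qed
  also have "\<dots> \<ge> 0"
  proof (rule infsum_nonneg)
    fix x
    have mx: "m x > 0" using m0 by blast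
    have gx: "(1 / m x) * (Dg x + V x * \<phi> x) - lam * \<phi> x \<ge> 0" using gs unfolding Dg_def by blast
    have "Dg x * (\<phi> x * ng x) + V x * nf x - lam * (nf x * m x)
        = (\<phi> x * ng x * m x) * ((1 / m x) * (Dg x + V x * \<phi> x) - lam * \<phi> x)"
      using mx unfolding nfng by (simp add: field_simps power2_eq_square)
    also have "\<dots> \<ge> 0" using gx phip[of x] ng0[of x] mx by (intro mult_nonneg_nonneg) (auto simp: less_imp_le)
    finally show "Dg x * (\<phi> x * ng x) + V x * nf x - lam * (nf x * m x) \<ge> 0" .
  qed
  finally have main: "energy_V b V f - lam * l2_norm_sq m f \<ge> (1/2) * infsum Q UNIV" by simp
  have "infsum (\<lambda>z. (1/c^2) * Wp z) UNIV \<le> infsum Q UNIV"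
  proof (rule infsum_mono)
    show "(\<lambda>z. (1/c^2) * Wp z) summable_on UNIV" using Wsum by (rule summable_on_cmult_right)
    show "Q summable_on UNIV" by (rule Qsum)
    fix z :: "'a \<times> 'a"
    obtain x y where z: "z = (x,y)" by (cases z)
    have "1/c * (1/c) \<le> \<phi> x * \<phi> y" using phi c0 phip[of x] by (intro mult_mono) (auto simp: less_imp_le)
    hence "1/c^2 * (cmod (g x - g y))^2 \<le> \<phi> x * \<phi> y * (cmod (g x - g y))^2"
      by (intro mult_right_mono) (auto simp: power2_eq_square)
    hence "b x y * (1/c^2 * (cmod (g x - g y))^2) \<le> b x y * (\<phi> x * \<phi> y * (cmod (g x - g y))^2)"
      using b0 by (intro mult_left_mono) auto
    then show "(1/c^2) * Wp z \<le> Q z" unfolding Wp_def Q_def z by (simp add: mult_ac)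
  qed
  hence "(1/c^2) * infsum Wp UNIV \<le> infsum Q UNIV" by (simp only: infsum_cmult_right')
  hence ineq: "energy_V b V f - lam * l2_norm_sq m f \<ge> (1/(2*c^2)) * infsum Wp UNIV" using main by simp
  have Wpe: "Wp = (\<lambda>e. b (fst e) (snd e) * (cmod (g (fst e) - g (snd e)))^2)"
    unfolding Wp_def by (simp add: fun_eq_iff split_def)
  have ngm': "(\<lambda>x. m x * ng x) summable_on UNIV" using ngm by (simp add: mult.commute)
  show ?thesis using ineq Wsum ngm' unfolding Wpe g_def ng_def by simp
qed

lemma covR_nonneg:
  assumes "rel_dense b D" shows "covering_radius b D \<ge> 0"
proof -
  define S where "S = {R. R > 0 \<and> (\<Union>p\<in>D. gball b p R) = UNIV}"
  have Sne: "S \<noteq> {}" using assms unfolding rel_dense_def S_def by auto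
  have "Inf S \<ge> 0" using Sne by (rule cInf_greatest) (auto simp: S_def)
  then show ?thesis unfolding S_def covering_radius_def by simp
qed

lemma vol_bound:
  assumes m0: "\<forall>x. m x > 0" and R0: "R \<ge> 0" and c1: "c \<ge> 1"
    and fin: "vol_sup b m (c^2 * R) < top"
    and A: "finite A" "A \<subseteq> gball b u R"
  shows "sum m A \<le> enn2real (vol_sup b m (c^2 * R))"
proof -
  have sub: "gball b u R \<subseteq> gball b u (c^2 * R)"
  proof -
    have "R \<le> c^2 * R" using R0 c1 by (simp add: mult_le_cancel_right1 one_le_power)
    then show ?thesis unfolding gball_def by auto
  qed
  have "ennreal (sum m A) = (\<Sum>x\<in>A. ennreal (m x))"
    using m0 by (simp add: less_imp_le)
  also have "\<dots> = (\<Sum>\<^sub>\<infinity>x\<in>A. ennreal (m x))" using A(1) by simp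
  also have "\<dots> \<le> (\<Sum>\<^sub>\<infinity>x\<in>gball b u (c^2 * R). ennreal (m x))"
    using A(2) sub by (intro infsum_mono_neutral nonneg_summable_on_complete) auto
  also have "\<dots> = gvol m (gball b u (c^2 * R))" unfolding gvol_def by simp
  also have "\<dots> \<le> vol_sup b m (c^2 * R)" unfolding vol_sup_def by (rule SUP_upper) simp
  finally have "ennreal (sum m A) \<le> vol_sup b m (c^2 * R)" .
  hence "enn2real (ennreal (sum m A)) \<le> enn2real (vol_sup b m (c^2 * R))"
    using fin by (rule enn2real_mono)
  then show ?thesis using m0 by (simp add: sum_nonneg less_imp_le)
qed

theorem theorem7p1:
  fixes b :: "'a::countable \<Rightarrow> 'a \<Rightarrow> real" and m V :: "'a \<Rightarrow> real"
    and D :: "'a set" and \<phi> :: "'a \<Rightarrow> real" and c :: real and f :: "'a \<Rightarrow> complex"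
  assumes "weighted_graph b m" and "graph_connected b"
    and "cond_B b m" and "cond_M m"
    and "bounded (range V)"
    and "rel_dense b D"
    and "regular_ground_state b m V \<phi> c"
    and "f \<in> l2 m" and "\<forall>x\<in>D. f x = 0"
  shows "energy_V b V f \<ge>
    (lambda_V b m V + 1 / (c ^ 4 * covering_radius b D *
        enn2real (vol_sup b m (c\<^sup>2 * covering_radius b D)))) * l2_norm_sq m f"
proof -
  note wg = assms(1)[unfolded weighted_graph_def]
  have b0: "\<forall>x y. b x y \<ge> 0" and bsym: "\<forall>x y. b x y = b y x" and bsum: "\<forall>x. b x summable_on UNIV"
    and m0: "\<forall>x. m x > 0" using wg by auto
  obtain CB where CB: "\<forall>x. (\<Sum>\<^sub>\<infinity>y. b x y) / m x \<le> CB" using assms(3) unfolding cond_B_def by blast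
  have deg: "\<forall>x. (\<Sum>\<^sub>\<infinity>y. b x y) \<le> CB * m x"
  proof
    fix x have "m x > 0" using m0 by blast
    then show "(\<Sum>\<^sub>\<infinity>y. b x y) \<le> CB * m x" using CB[rule_format, of x] by (simp add: field_simps)
  qed
  obtain CM where CM: "\<forall>x. m x \<le> CM" using assms(4) unfolding cond_M_def by blast
  have bdeg: "b x y \<le> (\<Sum>\<^sub>\<infinity>y. b x y)" for x y
  proof -
    have "sum (b x) {y} \<le> infsum (b x) UNIV"
      using bsum b0 by (intro finite_sum_le_infsum) auto
    then show ?thesis by simp
  qed
  define K where "K = \<bar>CB\<bar> * \<bar>CM\<bar> + 1"
  have Kp: "K > 0" unfolding K_def by (smt (verit) abs_ge_zero mult_nonneg_nonneg)
  have Kb: "\<forall>x y. b x y \<le> K"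
  proof (intro allI)
    fix x y
    have mx: "m x > 0" "m x \<le> CM" using m0 CM by auto
    have mcm: "m x \<le> \<bar>CM\<bar>" using mx(2) abs_ge_self[of CM] by linarith
    have h1: "CB * m x \<le> \<bar>CB\<bar> * m x" using mx(1) by (intro mult_right_mono) (auto simp: less_imp_le)
    have h2: "\<bar>CB\<bar> * m x \<le> \<bar>CB\<bar> * \<bar>CM\<bar>" using mcm by (intro mult_left_mono) auto
    have h3: "b x y \<le> CB * m x" using bdeg[of x y] deg[rule_format, of x] by linarith
    show "b x y \<le> K" unfolding K_def using h1 h2 h3 by linarith
  qed
  obtain B where B: "\<forall>x. \<bar>V x\<bar> \<le> B" using assms(5) unfolding bounded_iff by auto
  note rgs = assms(7)[unfolded regular_ground_state_def ground_state_def]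
  have phipos: "\<forall>x. \<phi> x > 0" and phisum: "\<forall>x. (\<lambda>y. b x y * \<phi> y) summable_on UNIV"
    and gs: "\<forall>x. (1 / m x) * ((\<Sum>\<^sub>\<infinity>y. b x y * (\<phi> x - \<phi> y)) + V x * \<phi> x) - lambda_V b m V * \<phi> x \<ge> 0"
    and c1: "c \<ge> 1" and phi: "\<forall>x. 1 / c \<le> \<phi> x \<and> \<phi> x \<le> c"
    using rgs by auto
  have c0: "c > 0" using c1 by simp
  define R where "R = covering_radius b D"
  have R0: "R \<ge> 0" unfolding R_def using covR_nonneg[OF assms(6)] .
  have "\<forall>x. \<exists>\<gamma>. x \<notin> D \<longrightarrow> (\<gamma> \<noteq> [] \<and> successively (\<lambda>x y. b x y > 0) \<gamma> \<and> hd \<gamma> \<in> D \<and> last \<gamma> = x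
     \<and> plen b \<gamma> \<le> R \<and> distinct \<gamma>)"
    using exist_path[OF b0 bsym bsum Kb Kp assms(2) assms(6)] unfolding R_def by blast
  hence "\<exists>\<gamma>. \<forall>x. x \<notin> D \<longrightarrow> (\<gamma> x \<noteq> [] \<and> successively (\<lambda>x y. b x y > 0) (\<gamma> x) \<and> hd (\<gamma> x) \<in> D
        \<and> last (\<gamma> x) = x \<and> plen b (\<gamma> x) \<le> R \<and> distinct (\<gamma> x))" by (rule choice)
  then obtain \<gamma> where paths: "\<forall>x. x \<notin> D \<longrightarrow> \<gamma> x \<noteq> [] \<and> successively (\<lambda>x y. b x y > 0) (\<gamma> x) \<and> hd (\<gamma> x) \<in> D
        \<and> last (\<gamma> x) = x \<and> plen b (\<gamma> x) \<le> R \<and> distinct (\<gamma> x)"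
    by blast
  define nf where "nf x = (cmod (f x))^2" for x
  have fl2: "(\<lambda>x. (cmod (f x))^2 * m x) summable_on UNIV" using assms(8) unfolding l2_def by simp
  have mlow: "1 \<le> R * CB * m x" if x: "x \<notin> D" for x
  proof -
    have p: "\<gamma> x \<noteq> []" "successively (\<lambda>x y. b x y > 0) (\<gamma> x)" "hd (\<gamma> x) \<in> D" "last (\<gamma> x) = x"
       "plen b (\<gamma> x) \<le> R" using paths x by auto
    define \<gamma>' where "\<gamma>' = butlast (\<gamma> x)"
    have geq: "\<gamma> x = \<gamma>' @ [x]" unfolding \<gamma>'_def using p(1,4) append_butlast_last_id by metis
    have ne: "\<gamma>' \<noteq> []"
    proof
      assume "\<gamma>' = []" hence "\<gamma> x = [x]" using geq by simp
      then show False using p(3) x by simp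
    qed
    have bl: "b (last \<gamma>') x > 0" using p(2) geq ne by (auto simp: successively_append_iff)
    have "plen b (\<gamma> x) = plen b \<gamma>' + 1 / b (last \<gamma>') x" using geq ne plen_snoc by metis
    moreover have "plen b \<gamma>' \<ge> 0" using plen_nonneg b0 by blast
    ultimately have "1 / b (last \<gamma>') x \<le> R" using p(5) by linarith
    hence "1 \<le> R * b (last \<gamma>') x" using bl by (simp add: field_simps)
    also have "b (last \<gamma>') x \<le> CB * m x" using bdeg[of x "last \<gamma>'"] deg bsym by (metis order_trans)
    hence "R * b (last \<gamma>') x \<le> R * (CB * m x)" using R0 by (rule mult_left_mono)
    finally show ?thesis by (simp add: mult_ac)
  qed
  have nfle: "nf x \<le> (R * CB) * (nf x * m x)" for x
  proof (cases "x \<in> D")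
    case True then show ?thesis using assms(9) unfolding nf_def by simp
  next
    case False
    have "nf x * 1 \<le> nf x * (R * CB * m x)" using mlow[OF False] unfolding nf_def
      by (intro mult_left_mono) auto
    then show ?thesis by (simp add: mult_ac)
  qed
  have nfsum: "nf summable_on UNIV"
  proof (rule summable_on_comparison_test)
    show "(\<lambda>x. (R * CB) * (nf x * m x)) summable_on UNIV"
      using fl2 unfolding nf_def by (intro summable_on_cmult_right)
    show "nf x \<le> R * CB * (nf x * m x)" for x by (rule nfle)
    show "0 \<le> nf x" for x unfolding nf_def by simp
  qed
  have Vsum: "(\<lambda>x. V x * (cmod (f x))^2) summable_on UNIV"
  proof (rule summable_dom)
    show "(\<lambda>x. B * nf x) summable_on UNIV" using nfsum by (rule summable_on_cmult_right)
    fix x show "\<bar>V x * (cmod (f x))^2\<bar> \<le> B * nf x"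
      using B unfolding nf_def by (simp add: abs_mult mult_right_mono)
  qed
  define lam where "lam = lambda_V b m V"
  define g where "g x = f x / complex_of_real (\<phi> x)" for x
  have GS: "energy_V b V f - lam * l2_norm_sq m f \<ge>
     (1/(2*c^2)) * (\<Sum>\<^sub>\<infinity>e. b (fst e) (snd e) * (cmod (g (fst e) - g (snd e)))^2)
   \<and> (\<lambda>e. b (fst e) (snd e) * (cmod (g (fst e) - g (snd e)))^2) summable_on UNIV
   \<and> (\<lambda>x. m x * (cmod (g x))^2) summable_on UNIV"
    unfolding g_def lam_def
    by (rule gs_ineq[OF b0 bsym bsum deg m0 phi c1 phisum gs fl2 Vsum])
  define SW where "SW = (\<Sum>\<^sub>\<infinity>e. b (fst e) (snd e) * (cmod (g (fst e) - g (snd e)))^2)"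
  define G where "G = (\<Sum>\<^sub>\<infinity>x. m x * (cmod (g x))^2)"
  define F where "F = l2_norm_sq m f"
  define E where "E = energy_V b V f"
  have EF: "E - lam * F \<ge> SW / (2*c^2)" using GS unfolding SW_def E_def F_def by simp
  have SW0: "SW \<ge> 0" unfolding SW_def using b0 by (intro infsum_nonneg) simp
  have F0: "F \<ge> 0" unfolding F_def l2_norm_sq_def using m0 by (intro infsum_nonneg) (simp add: less_imp_le)
  have g0: "\<forall>x\<in>D. g x = 0" using assms(9) unfolding g_def by simp
  have FG: "F \<le> c^2 * G"
  proof -
    have "F \<le> (\<Sum>\<^sub>\<infinity>x. c^2 * (m x * (cmod (g x))^2))"
      unfolding F_def l2_norm_sq_def
    proof (rule infsum_mono)
      show "(\<lambda>x. (cmod (f x))\<^sup>2 * m x) summable_on UNIV" by (rule fl2)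
      show "(\<lambda>x. c^2 * (m x * (cmod (g x))^2)) summable_on UNIV"
        using GS by (intro summable_on_cmult_right) simp
      fix x
      have px: "\<phi> x > 0" "\<phi> x \<le> c" using phipos phi by auto
      have "f x = complex_of_real (\<phi> x) * g x" unfolding g_def using px by simp
      hence "(cmod (f x))^2 = (\<phi> x)^2 * (cmod (g x))^2"
        by (simp add: norm_mult power_mult_distrib abs_of_pos[OF px(1)])
      also have "\<dots> \<le> c^2 * (cmod (g x))^2"
        using px by (intro mult_right_mono power_mono) auto
      finally show "(cmod (f x))\<^sup>2 * m x \<le> c^2 * (m x * (cmod (g x))^2)"
        using m0 mult_right_mono[of "(cmod (f x))^2" "c^2 * (cmod (g x))^2" "m x"]
        by (simp add: mult_ac less_imp_le)
    qed
    also have "\<dots> = c^2 * G" unfolding G_def by (simp add: infsum_cmult_right')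
    finally show ?thesis .
  qed
  define Vol where "Vol = enn2real (vol_sup b m (c\<^sup>2 * R))"
  have Vol0: "Vol \<ge> 0" unfolding Vol_def by simp
  have goal_eq: "(lam + 1 / (c ^ 4 * R * Vol)) * F = lam * F + F / (c ^ 4 * R * Vol)"
    by (simp add: algebra_simps)
  have "E \<ge> (lam + 1 / (c ^ 4 * R * Vol)) * F"
  proof (cases "R * Vol = 0")
    case True
    hence z: "c ^ 4 * R * Vol = 0" by (simp add: mult.assoc)
    have "(lam + 1 / (c ^ 4 * R * Vol)) * F = lam * F" by (simp only: z) simp
    moreover have "SW / (2*c^2) \<ge> 0" using SW0 c0 by simp
    ultimately show ?thesis using EF by linarith
  next
    case False
    hence RV: "R * Vol > 0" using R0 Vol0 by (simp add: less_le)
    have fin: "vol_sup b m (c\<^sup>2 * R) < top"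
    proof (rule ccontr)
      assume "\<not> vol_sup b m (c\<^sup>2 * R) < top"
      hence "vol_sup b m (c\<^sup>2 * R) = top" using top.not_eq_extremum by blast
      hence "Vol = 0" unfolding Vol_def by simp
      then show False using False by simp
    qed
    have vol: "\<forall>u A. finite A \<longrightarrow> A \<subseteq> gball b u R \<longrightarrow> sum m A \<le> Vol"
      unfolding Vol_def using vol_bound[OF m0 R0 c1 fin] by blast
    have H: "G \<le> R * Vol * (1/2) * SW"
      unfolding G_def SW_def
      by (rule hardy[OF b0 bsym m0 paths g0 _ _ R0 Vol0 vol]) (use GS in auto)
    have "c^2 * G \<le> c^2 * (R * Vol * (1/2) * SW)" using H by (rule mult_left_mono) simp
    hence "F \<le> c^2 * (R * Vol * (1/2) * SW)" using FG by linarith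
    hence i1: "F / (c^4 * R * Vol) \<le> c^2 * (R * Vol * (1/2) * SW) / (c^4 * R * Vol)"
      using RV c0 by (intro divide_right_mono) (auto simp: mult.assoc)
    have Rn: "R \<noteq> 0" "Vol \<noteq> 0" using RV by auto
    have i2: "c^2 * (R * Vol * (1/2) * SW) / (c^4 * R * Vol) = SW / (2 * c^2)"
      using Rn c0 by (simp add: field_simps power4_eq_xxxx power2_eq_square)
    have "F / (c^4 * R * Vol) \<le> SW / (2 * c^2)" using i1 i2 by simp
    then show ?thesis using EF by (simp add: goal_eq)
  qed
  then show ?thesis unfolding E_def F_def lam_def Vol_def R_def .
qed

end
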